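(* Let $n$ be a positive integer. There exists a positive integer $k$ such that the complete graph $K_n$ is a prime $k$th-power distance graph if and only if $n<7$.
   Context: A graph $G$ is a prime $k$th-power distance graph if there is an injective map $L:V(G)\to\mathbb{Z}$ such that for every edge $uv$ of $G$, $|L(u)-L(v)|=p^j$ for some prime $p$ and some positive integer $j\le k$. *)

theory Defs
  imports "HOL-Computational_Algebra.Primes"
begin

definition prime_kth_power_distance_graph ::
  "nat \<Rightarrow> 'a set \<Rightarrow> ('a \<Rightarrow> 'a \<Rightarrow> bool) \<Rightarrow> bool" where
  "prime_kth_power_distance_graph k V E \<longleftrightarrow>
     (\<exists>L :: 'a \<Rightarrow> int. inj_on L V \<and>
        (\<forall>u\<in>V. \<forall>v\<in>V. E u v \<longrightarrow>
           (\<exists>p j. prime (p::nat) \<and> 1 \<le> j \<and> j \<le> k \<and> \<bar>L u - L v\<bar> = int p ^ j)))"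

definition complete_graph_vertices :: "nat \<Rightarrow> nat set" where
  "complete_graph_vertices n = {0..<n}"

definition complete_graph_edge :: "nat \<Rightarrow> nat \<Rightarrow> bool" where
  "complete_graph_edge u v \<longleftrightarrow> u \<noteq> v"

end

theory Submission
  imports Defs
begin

definition LL :: "nat \<Rightarrow> int" where "LL i = [0,2,4,7,9,11] ! i"

lemma six_set: "{0..<6::nat} = {0,1,2,3,4,5}" by auto

lemma LL_inj: "inj_on LL {0..<6}"
  unfolding six_set inj_on_def by (simp add: LL_def)

lemma LL_diff: "u \<in> {0..<6} \<Longrightarrow> v \<in> {0..<6} \<Longrightarrow> u \<noteq> v \<Longrightarrow> \<bar>LL u - LL v\<bar> \<in> {2,3,4,5,7,9,11}"
  unfolding six_set by (auto simp add: LL_def)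

lemma small_pp: "d \<in> {2,3,4,5,7,9,11::int} \<Longrightarrow> \<exists>p j. prime (p::nat) \<and> 1 \<le> j \<and> j \<le> (2::nat) \<and> d = int p ^ j"
proof -
  have p: "prime (11::nat)" "prime (7::nat)" "prime (5::nat)" "prime (3::nat)" "prime (2::nat)"
    by (simp_all add: prime_nat_iff' atLeastLessThan_nat_numeral)
  assume "d \<in> {2,3,4,5,7,9,11::int}"
  then consider "d = 2" | "d = 3" | "d = 4" | "d = 5" | "d = 7" | "d = 9" | "d = 11" by auto
  then show ?thesis
  proof cases
    case 1 then show ?thesis using p by (intro exI[of _ 2] exI[of _ 1]) auto
  next
    case 2 then show ?thesis using p by (intro exI[of _ 3] exI[of _ 1]) auto
  next
    case 3 then show ?thesis using p by (intro exI[of _ 2] exI[of _ 2]) auto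
  next
    case 4 then show ?thesis using p by (intro exI[of _ 5] exI[of _ 1]) auto
  next
    case 5 then show ?thesis using p by (intro exI[of _ 7] exI[of _ 1]) auto
  next
    case 6 then show ?thesis using p by (intro exI[of _ 3] exI[of _ 2]) auto
  next
    case 7 then show ?thesis using p by (intro exI[of _ 11] exI[of _ 1]) auto
  qed
qed

lemma pow2_sum:
  assumes "(2::int)^x + 2^y = 2^z" shows "x = y"
proof (rule ccontr)
  assume "x \<noteq> y"
  then consider "x < y" | "y < x" by linarith
  then show False
  proof cases
    case 1
    have "(2::int)^y < 2^z" using assms by (smt (verit) zero_less_power)
    then have "y < z" by (meson one_less_numeral_iff power_less_imp_less_exp semiring_norm(76))
    then have "(2::int)^(Suc y) \<le> 2^z" by (intro power_increasing) auto
    moreover have "(2::int)^x < 2^y" using 1 by simp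
    ultimately show False using assms by simp
  next
    case 2
    have "(2::int)^x < 2^z" using assms by (smt (verit) zero_less_power)
    then have "x < z" by (meson one_less_numeral_iff power_less_imp_less_exp semiring_norm(76))
    then have "(2::int)^(Suc x) \<le> 2^z" by (intro power_increasing) auto
    moreover have "(2::int)^y < 2^x" using 2 by simp
    ultimately show False using assms by simp
  qed
qed

lemma three_pow2: "3 * (2::int)^x \<noteq> 2^w"
proof
  assume h: "3 * (2::int)^x = 2^w"
  consider "w \<le> x" | "w = Suc x" | "Suc (Suc x) \<le> w" by linarith
  then show False
  proof cases
    case 1
    then have "(2::int)^w \<le> 2^x" by simp
    then show False using h by (smt (verit) zero_less_power)
  next
    case 2 then show False using h by simp
  next
    case 3
    then have "(2::int)^(Suc (Suc x)) \<le> 2^w" by (meson one_le_numeral power_increasing)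
    moreover have "(0::int) < 2^x" by simp
    ultimately show False using h by simp
  qed
qed

lemma four_pow2:
  assumes "a < b" "b < c" "c < d"
    and "\<And>x y. x \<in> {a,b,c,d} \<Longrightarrow> y \<in> {a,b,c,d} \<Longrightarrow> x < y \<Longrightarrow> \<exists>m. y - x = (2::int)^m"
  shows False
proof -
  obtain x where x: "b - a = 2^x" using assms(4)[of a b] assms(1) by blast
  obtain y where y: "c - b = 2^y" using assms(4)[of b c] assms(2) by blast
  obtain z where z: "d - c = 2^z" using assms(4)[of c d] assms(3) by blast
  have "a < c" "b < d" "a < d" using assms(1-3) by auto
  then obtain u where u: "c - a = 2^u" using assms(4)[of a c] by blast
  obtain v where v: "d - b = 2^v" using assms(4)[of b d] \<open>b < d\<close> by blast
  obtain w where w: "d - a = 2^w" using assms(4)[of a d] \<open>a < d\<close> by blast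
  have "x = y" using pow2_sum[of x y u] x y u by simp
  moreover have "y = z" using pow2_sum[of y z v] y z v by simp
  ultimately have "3 * (2::int)^x = 2^w" using x y z w by simp
  then show False using three_pow2 by blast
qed

lemma pp_even:
  assumes "prime (p::nat)" "1 \<le> j" "even (int p ^ j)" shows "p = 2"
proof -
  have "even (int p)" using assms(2,3) by simp
  then have "2 dvd p" by presburger
  then show ?thesis using assms(1) unfolding prime_nat_iff by auto
qed

lemma no_four:
  fixes T :: "int set"
  assumes "card T = 4"
    and "\<And>x y. x \<in> T \<Longrightarrow> y \<in> T \<Longrightarrow> x < y \<Longrightarrow> \<exists>m. y - x = (2::int)^m"
  shows False
proof -
  have fin: "finite T" using assms(1) by (metis card.infinite zero_neq_numeral)
  define xs where "xs = sorted_list_of_set T"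
  have len: "length xs = 4" using assms(1) fin by (simp add: xs_def)
  have sw: "sorted_wrt (<) xs" by (simp add: xs_def)
  have st: "set xs = T" using fin by (simp add: xs_def)
  obtain a b c d where xs4: "xs = [a,b,c,d]" using len
  proof -
    have "\<exists>a b c d. xs = [a,b,c,d]" using len
      by (cases xs; simp; rename_tac l1; case_tac l1; simp; rename_tac l2; case_tac l2; simp;
          rename_tac l3; case_tac l3; simp)
    then show ?thesis using that by blast
  qed
  have "a < b" "b < c" "c < d" using sw xs4 by auto
  moreover have "T = {a,b,c,d}" using st xs4 by auto
  ultimately show False using four_pow2[of a b c d] assms(2) by blast
qed

theorem mainTheorem10:
  fixes n :: nat
  assumes "n \<ge> 1"
  shows "(\<exists>k::nat. k \<ge> 1 \<and>
            prime_kth_power_distance_graph k (complete_graph_vertices n) complete_graph_edge)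
         \<longleftrightarrow> n < 7"
proof
  assume "\<exists>k::nat. k \<ge> 1 \<and>
            prime_kth_power_distance_graph k (complete_graph_vertices n) complete_graph_edge"
  then obtain k L where inj: "inj_on L {0..<n}"
    and pp: "\<And>u v. u \<in> {0..<n} \<Longrightarrow> v \<in> {0..<n} \<Longrightarrow> u \<noteq> v \<Longrightarrow>
           (\<exists>p j. prime (p::nat) \<and> 1 \<le> j \<and> j \<le> k \<and> \<bar>L u - L v\<bar> = int p ^ j)"
    unfolding prime_kth_power_distance_graph_def complete_graph_vertices_def complete_graph_edge_def
    by blast
  show "n < 7"
  proof (rule ccontr)
    assume "\<not> n < 7"
    define S where "S = L ` {0..<7}"
    have sub: "{0..<7} \<subseteq> {0..<n}" using \<open>\<not> n < 7\<close> by auto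
    have inj7: "inj_on L {0..<7}" using inj sub inj_on_subset by blast
    have cS: "card S = 7" using inj7 by (simp add: S_def card_image)
    have finS: "finite S" by (simp add: S_def)
    have key: "\<And>x y. x \<in> S \<Longrightarrow> y \<in> S \<Longrightarrow> x < y \<Longrightarrow> even (y - x) \<Longrightarrow> \<exists>m. y - x = (2::int)^m"
    proof -
      fix x y assume xS: "x \<in> S" and yS: "y \<in> S" and xy: "x < y" and ev: "even (y - x)"
      obtain u where u: "u \<in> {0..<7}" "x = L u" using xS S_def by auto
      obtain v where v: "v \<in> {0..<7}" "y = L v" using yS S_def by auto
      have "u \<noteq> v" using u v xy by auto
      then obtain p j where pj: "prime (p::nat)" "1 \<le> j" "\<bar>L v - L u\<bar> = int p ^ j"
        using pp[of v u] u v sub by blast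
      have eq: "y - x = int p ^ j" using pj(3) u v xy by simp
      then have "p = 2" using pp_even[OF pj(1,2)] ev by simp
      then show "\<exists>m. y - x = (2::int)^m" using eq by auto
    qed
    define E where "E = {x\<in>S. even x}"
    define Od where "Od = {x\<in>S. odd x}"
    have "S = E \<union> Od" "E \<inter> Od = {}" by (auto simp: E_def Od_def)
    then have "card E + card Od = 7" using cS finS
      by (metis E_def Od_def card_Un_disjoint finite_Un)
    then have "4 \<le> card E \<or> 4 \<le> card Od" by linarith
    then obtain P where P: "P \<subseteq> S" "4 \<le> card P" "\<And>x y. x \<in> P \<Longrightarrow> y \<in> P \<Longrightarrow> even (y - x)"
    proof
      assume "4 \<le> card E"
      moreover have "E \<subseteq> S" by (auto simp: E_def)
      moreover have "\<And>x y. x \<in> E \<Longrightarrow> y \<in> E \<Longrightarrow> even (y - x)" by (auto simp: E_def)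
      ultimately show ?thesis using that by blast
    next
      assume "4 \<le> card Od"
      moreover have "Od \<subseteq> S" by (auto simp: Od_def)
      moreover have "\<And>x y. x \<in> Od \<Longrightarrow> y \<in> Od \<Longrightarrow> even (y - x)" by (auto simp: Od_def)
      ultimately show ?thesis using that by blast
    qed
    obtain T where T: "T \<subseteq> P" "card T = 4" using P(2) by (meson obtain_subset_with_card_n)
    show False
    proof (rule no_four[OF T(2)])
      fix x y assume "x \<in> T" "y \<in> T" "x < y"
      then show "\<exists>m. y - x = (2::int)^m" using key P T by blast
    qed
  qed
next
  assume n7: "n < 7"
  show "\<exists>k::nat. k \<ge> 1 \<and>
            prime_kth_power_distance_graph k (complete_graph_vertices n) complete_graph_edge"
  proof (intro exI[of _ 2] conjI)
    have sub: "{0..<n} \<subseteq> {0..<6}" using n7 by auto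
    show "prime_kth_power_distance_graph 2 (complete_graph_vertices n) complete_graph_edge"
      unfolding prime_kth_power_distance_graph_def complete_graph_vertices_def complete_graph_edge_def
    proof (intro exI[of _ LL] conjI ballI impI)
      show "inj_on LL {0..<n}" using LL_inj sub inj_on_subset by blast
    next
      fix u v assume "u \<in> {0..<n}" "v \<in> {0..<n}" "u \<noteq> v"
      then show "\<exists>p j. prime (p::nat) \<and> 1 \<le> j \<and> j \<le> 2 \<and> \<bar>LL u - LL v\<bar> = int p ^ j"
        using small_pp LL_diff sub by blast
    qed
  qed simp
qed

end
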